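(* Let $M\ge 2$, $\gamma_r\ge 0$ and $K>0$, and let $p_r(i)=i^{-\gamma_r}/\sum_{j=1}^M j^{-\gamma_r}$. Put $b=\gamma_r/K$, and suppose $b\le[M\log M-\log(M!)]^{-1}$. Then the maximizer of $$\sum_{i=1}^M p_r(i)\big(1-e^{-K p_c(i)}\big)$$ over probability vectors $(p_c(1),\dots,p_c(M))$ is $$p_c(i)=a_i+b\log\Big(\frac{i+1}{i}\Big),\qquad a_i=\frac1M+\frac bM\sum_{j=1}^M\log\Big(\frac{j}{i+1}\Big),\qquad i=1,\dots,M.$$ Equivalently, $p_c(i)=\frac1M+\frac bM\sum_{j=1}^M\log(j/i)$, and these values are nonnegative and sum to $1$. In the application, $K=\frac{\pi\lambda_t\beta({\rm T},4)}{\sqrt{\mu{\rm T}\sigma^2}}$, so that $b=\frac{\sqrt{\mu{\rm T}\sigma^2}\,\gamma_r}{\pi\lambda_t\beta({\rm T},4)}$.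
   Context: The objective is an approximation of the sequential density of successful receptions for Rayleigh fading, arbitrary noise $\sigma^2>0$ and path loss exponent $\alpha=4$. It is obtained by replacing the Gaussian tail function in $$p_{\rm cov}({\rm T},\lambda_t p_c(i),4)=\frac{\sqrt{2\pi}}{\beta({\rm T},4)}\,x\,{\rm Q}(x)e^{x^2/2},\qquad x=\frac{\pi\lambda_t p_c(i)\beta({\rm T},4)}{\sqrt{2\mu{\rm T}\sigma^2}},$$ with the approximation ${\rm Q}(x)\approx\frac{(1-e^{-1.4x})e^{-x^2/2}}{1.135\sqrt{2\pi}\,x}$. This gives $$p_{\rm cov}\approx\frac{1}{1.135\,\beta({\rm T},4)}\Big(1-e^{-\pi\lambda_t p_c(i)\beta({\rm T},4)/\sqrt{\mu{\rm T}\sigma^2}}\Big).$$ Here $\lambda_t$ is the transmitter intensity, $\beta({\rm T},4)=1+\sqrt{\rm T}\arctan\sqrt{\rm T}$, $1/\mu$ is the transmit power, and $p_r$ and $p_c$ are the request and caching probability mass functions over $M$ files. *)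

theory Defs
  imports Complex_Main
begin

definition p_req :: "nat \<Rightarrow> real \<Rightarrow> nat \<Rightarrow> real" where
  "p_req M gr i = real i powr (- gr) / (\<Sum>j=1..M. real j powr (- gr))"

text \<open>Probability vectors over files 1..M (values outside 1..M are irrelevant).\<close>
definition prob_vec :: "nat \<Rightarrow> (nat \<Rightarrow> real) \<Rightarrow> bool" where
  "prob_vec M q \<longleftrightarrow> (\<forall>i\<in>{1..M}. 0 \<le> q i) \<and> (\<Sum>i=1..M. q i) = 1"

text \<open>Objective: approximate density of successful receptions.\<close>
definition succ_obj :: "nat \<Rightarrow> real \<Rightarrow> real \<Rightarrow> (nat \<Rightarrow> real) \<Rightarrow> real" where
  "succ_obj M gr K q = (\<Sum>i=1..M. p_req M gr i * (1 - exp (- K * q i)))"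

end

theory Submission
  imports Defs
begin

lemma exp_strict: fixes t :: real assumes "t \<noteq> 0" shows "1 + t < exp t"
proof (cases "1 + t/2 \<ge> 0")
  case True
  have "exp t = exp (t/2) * exp (t/2)" by (simp flip: exp_add)
  also have "\<dots> \<ge> (1 + t/2) * (1 + t/2)"
    using True exp_ge_add_one_self[of "t/2"] by (intro mult_mono) auto
  finally have "exp t \<ge> 1 + t + t*t/4" by (simp add: algebra_simps)
  moreover have "t*t > 0" using assms by (metis mult_pos_pos mult_neg_neg linorder_neq_iff)
  ultimately show ?thesis by linarith
next
  case False
  then have "1 + t < 0" by linarith
  then show ?thesis using exp_gt_zero[of t] by linarith
qed

lemma tangent:
  fixes K x y :: real assumes "K > 0"
  shows "1 - exp (- K * y) \<le> 1 - exp (- K * x) + K * exp (- K * x) * (y - x)"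
    and "y \<noteq> x \<Longrightarrow> 1 - exp (- K * y) < 1 - exp (- K * x) + K * exp (- K * x) * (y - x)"
proof -
  have e: "exp (- K * y) = exp (- K * x) * exp (- K * (y - x))"
    by (simp flip: exp_add add: algebra_simps)
  have "exp (- K * (y - x)) \<ge> 1 + (- K * (y - x))" by (rule exp_ge_add_one_self)
  then have "exp (- K * x) * exp (- K * (y - x)) \<ge> exp (- K * x) * (1 + (- K * (y - x)))"
    by (intro mult_left_mono) auto
  then show "1 - exp (- K * y) \<le> 1 - exp (- K * x) + K * exp (- K * x) * (y - x)"
    using e by (simp add: algebra_simps)
  assume "y \<noteq> x"
  then have "- K * (y - x) \<noteq> 0" using assms by simp
  then have "exp (- K * (y - x)) > 1 + (- K * (y - x))" by (rule exp_strict)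
  then have "exp (- K * x) * exp (- K * (y - x)) > exp (- K * x) * (1 + (- K * (y - x)))"
    by (intro mult_strict_left_mono) auto
  then show "1 - exp (- K * y) < 1 - exp (- K * x) + K * exp (- K * x) * (y - x)"
    using e by (simp add: algebra_simps)
qed

theorem lemma7:
  fixes M :: nat and gr K b :: real and pc a :: "nat \<Rightarrow> real"
  assumes "M \<ge> 2" and "gr \<ge> 0" and "K > 0"
    and b_def: "b = gr / K"
    and b_le: "b \<le> 1 / (real M * ln (real M) - ln (fact M))"
    and a_def: "\<And>i. a i = 1 / real M + b / real M * (\<Sum>j=1..M. ln (real j / real (i + 1)))"
    and pc_def: "\<And>i. pc i = a i + b * ln (real (i + 1) / real i)"
  shows "(\<forall>i\<in>{1..M}. pc i = 1 / real M + b / real M * (\<Sum>j=1..M. ln (real j / real i)))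
       \<and> (\<forall>i\<in>{1..M}. 0 \<le> pc i) \<and> (\<Sum>i=1..M. pc i) = 1
       \<and> prob_vec M pc
       \<and> (\<forall>q. prob_vec M q \<longrightarrow> succ_obj M gr K q \<le> succ_obj M gr K pc)
       \<and> (\<forall>q. prob_vec M q \<and> succ_obj M gr K q = succ_obj M gr K pc \<longrightarrow> (\<forall>i\<in>{1..M}. q i = pc i))"
proof -
  define S where "S = (\<Sum>j=1..M. ln (real j))"
  have Mpos: "real M > 0" using assms(1) by simp
  have sumln: "(\<Sum>j=1..M. ln (real j / real i)) = S - real M * ln (real i)" if "i > 0" for i
  proof -
    have "(\<Sum>j=1..M. ln (real j / real i)) = (\<Sum>j=1..M. ln (real j) - ln (real i))"
      using that by (intro sum.cong) (auto simp: ln_div)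
    then show ?thesis by (simp add: sum_subtractf S_def)
  qed
  have pcf: "pc i = 1 / real M + b / real M * (S - real M * ln (real i))" if "i > 0" for i
  proof -
    have "pc i = 1 / real M + b / real M * (S - real M * ln (real (i+1))) + b * (ln (real (i+1)) - ln (real i))"
      using that pc_def[of i] a_def[of i] sumln[of "i+1"] by (simp add: ln_div)
    also have "\<dots> = 1 / real M + b / real M * (S - real M * ln (real i))"
      using Mpos by (simp add: field_simps)
    finally show ?thesis .
  qed
  have P1: "\<forall>i\<in>{1..M}. pc i = 1 / real M + b / real M * (\<Sum>j=1..M. ln (real j / real i))"
    using pcf sumln by auto
  have lnfact: "ln (fact M) = S"
    unfolding fact_prod S_def by (subst of_nat_prod, subst ln_prod) auto
  have bnn: "b \<ge> 0" using assms(2,3) b_def by simp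
  have Sle: "S \<le> real M * ln (real M)"
  proof -
    have "S \<le> (\<Sum>j=1..M. ln (real M))" unfolding S_def by (intro sum_mono) auto
    then show ?thesis by simp
  qed
  have D: "b * (real M * ln (real M) - S) \<le> 1"
  proof (cases "real M * ln (real M) - S = 0")
    case True then show ?thesis by simp
  next
    case False
    then have "real M * ln (real M) - S > 0" using Sle by simp
    then show ?thesis using b_le lnfact by (simp add: field_simps)
  qed
  have P2: "\<forall>i\<in>{1..M}. 0 \<le> pc i"
  proof
    fix i assume i: "i \<in> {1..M}"
    have "ln (real i) \<le> ln (real M)" using i by auto
    then have "b * (S - real M * ln (real i)) \<ge> b * (S - real M * ln (real M))"
      using bnn Mpos by (intro mult_left_mono) auto
    then have "1 + b * (S - real M * ln (real i)) \<ge> 0" using D by (simp add: algebra_simps)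
    then have "(1 + b * (S - real M * ln (real i))) / real M \<ge> 0" using Mpos by simp
    moreover have "pc i = (1 + b * (S - real M * ln (real i))) / real M" using pcf[of i] i by (simp add: add_divide_distrib)
    ultimately show "0 \<le> pc i" by (simp only:)
  qed
  have P3: "(\<Sum>i=1..M. pc i) = 1"
  proof -
    have X0: "(\<Sum>i=1..M. S - real M * ln (real i)) = 0"
      by (simp add: sum_subtractf sum_distrib_left[symmetric] S_def)
    have "(\<Sum>i=1..M. pc i) = (\<Sum>i=1..M. 1 / real M + b / real M * (S - real M * ln (real i)))"
      by (intro sum.cong) (auto simp: pcf)
    also have "\<dots> = (\<Sum>i=1..M. 1 / real M) + b / real M * (\<Sum>i=1..M. S - real M * ln (real i))"
      by (simp only: sum.distrib sum_distrib_left)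
    also have "\<dots> = 1" using Mpos X0 by simp
    finally show ?thesis .
  qed
  have PV: "prob_vec M pc" using P2 P3 unfolding prob_vec_def by auto
  define Z where "Z = (\<Sum>j=1..M. real j powr (- gr))"
  have Zpos: "Z > 0" unfolding Z_def using assms(1) by (intro sum_pos) auto
  define c where "c = exp (- K / real M - gr * S / real M) / Z"
  have Kb: "K * b = gr" using b_def assms(3) by simp
  have pconst: "p_req M gr i * exp (- K * pc i) = c" if i: "i \<in> {1..M}" for i
  proof -
    define A where "A = - K / real M - gr * S / real M"
    have e1: "- K * pc i = - K / real M - (K * b) * S / real M + (K * b) * ln (real i)"
    proof -
      have h: "real M * pc i + b * (real M * ln (real i)) = 1 + S * b"
        using pcf[of i] i Mpos by (simp add: field_simps)
      have "K * (real M * pc i + b * (real M * ln (real i))) = K * (1 + S * b)" by (simp only: h)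
      then show ?thesis using Mpos by (simp add: field_simps)
    qed
    have e2: "- K * pc i = A + gr * ln (real i)" unfolding e1 Kb A_def by simp
    have e3: "exp (- K * pc i) = exp A * exp (gr * ln (real i))"
      unfolding e2 by (rule exp_add)
    have e4: "real i powr (- gr) * exp (gr * ln (real i)) = 1"
      using i by (simp add: powr_def flip: exp_add)
    have "p_req M gr i * exp (- K * pc i) = (real i powr (- gr) * exp (gr * ln (real i))) * exp A / Z"
      unfolding p_req_def Z_def e3 by simp
    also have "\<dots> = c" unfolding e4 c_def A_def by simp
    finally show ?thesis .
  qed
  have ppos: "p_req M gr i > 0" if "i \<in> {1..M}" for i
    using that Zpos unfolding p_req_def Z_def[symmetric] by simp
  define h where "h q i = p_req M gr i * ((1 - exp (- K * pc i)) + K * exp (- K * pc i) * (q i - pc i)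
        - (1 - exp (- K * q i)))" for q :: "nat \<Rightarrow> real" and i
  have hnn: "h q i \<ge> 0" if "i \<in> {1..M}" for q i
    unfolding h_def using ppos[OF that] tangent(1)[OF assms(3), of "q i" "pc i"]
    by (intro mult_nonneg_nonneg) auto
  have hterm: "h q i = p_req M gr i * (1 - exp (- K * pc i)) + K * c * (q i - pc i)
          - p_req M gr i * (1 - exp (- K * q i))" if i: "i \<in> {1..M}" for q i
  proof -
    have "K * c * (q i - pc i) = p_req M gr i * (K * exp (- K * pc i) * (q i - pc i))"
      unfolding pconst[OF i, symmetric] by (simp only: mult_ac)
    then show ?thesis unfolding h_def by (simp only: distrib_left right_diff_distrib)
  qed
  have hsum: "(\<Sum>i=1..M. h q i) = succ_obj M gr K pc - succ_obj M gr K q" if q: "prob_vec M q" for q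
  proof -
    have "(\<Sum>i=1..M. h q i) = (\<Sum>i=1..M. p_req M gr i * (1 - exp (- K * pc i)) + K * c * (q i - pc i)
          - p_req M gr i * (1 - exp (- K * q i)))"
      by (intro sum.cong refl) (rule hterm, simp)
    also have "\<dots> = succ_obj M gr K pc + K * c * ((\<Sum>i=1..M. q i) - (\<Sum>i=1..M. pc i)) - succ_obj M gr K q"
      unfolding succ_obj_def by (simp only: sum.distrib sum_subtractf sum_distrib_left right_diff_distrib)
    also have "\<dots> = succ_obj M gr K pc - succ_obj M gr K q"
      using q P3 unfolding prob_vec_def by simp
    finally show ?thesis .
  qed
  have P5: "\<forall>q. prob_vec M q \<longrightarrow> succ_obj M gr K q \<le> succ_obj M gr K pc"
  proof (intro allI impI)
    fix q assume q: "prob_vec M q"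
    have "(\<Sum>i=1..M. h q i) \<ge> 0" using hnn by (intro sum_nonneg) auto
    then show "succ_obj M gr K q \<le> succ_obj M gr K pc" using hsum[OF q] by simp
  qed
  have P6: "\<forall>q. prob_vec M q \<and> succ_obj M gr K q = succ_obj M gr K pc \<longrightarrow> (\<forall>i\<in>{1..M}. q i = pc i)"
  proof (intro allI impI ballI)
    fix q i assume q: "prob_vec M q \<and> succ_obj M gr K q = succ_obj M gr K pc" and i: "i \<in> {1..M}"
    have "(\<Sum>i=1..M. h q i) = 0" using hsum q by simp
    then have "\<forall>i\<in>{1..M}. h q i = 0" using hnn by (subst sum_nonneg_eq_0_iff[symmetric]) auto
    then have h0: "h q i = 0" using i by auto
    show "q i = pc i"
    proof (rule ccontr)
      assume "q i \<noteq> pc i"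
      then have "1 - exp (- K * q i) < 1 - exp (- K * pc i) + K * exp (- K * pc i) * (q i - pc i)"
        by (rule tangent(2)[OF assms(3)])
      then have "h q i > 0" unfolding h_def using ppos[OF i] by (intro mult_pos_pos) auto
      then show False using h0 by simp
    qed
  qed
  show ?thesis using P1 P2 P3 PV P5 P6 by blast
qed

end
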